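(* Let $0\le b\le1$, $M>0$ and $0\le\alpha<1$, and let $r_0=r_0(\alpha)$ be the real root in $(0,1)$ of the equation \[2M\left(1+\frac{\alpha(1-r)\log(1-r)}{r}\right)=\big(2(1+M)(1-\alpha)+(2-\alpha)(M-4b)r\big)(1-r).\] Let $\mathcal{F}$ be the class of functions $f\in\mathcal{A}_b$, $f(z)=z+\sum_{n\ge2}a_nz^n$, with $|a_n|\le M/n$ for all $n\ge3$. Then: (i) every $f\in\mathcal{F}$ satisfies $\left|\frac{zf'(z)}{f(z)}-1\right|\le1-\alpha$ for $|z|\le r_0$; (ii) $r_0(\alpha)$ is the radius of starlikeness of order $\alpha$ of $\mathcal{F}$; (iii) $r_0(1/2)$ is the radius of parabolic starlikeness of $\mathcal{F}$. All results are sharp, with extremal function $f_0(z)=(1+M)z+(M/2-2b)z^2+M\log(1-z)=z-2bz^2-M\sum_{n\ge3}z^n/n$.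
   Context: $\mathbb{D}=\{z\in\mathbb{C}:|z|<1\}$; $\log(1-z)$ denotes the principal branch on $\mathbb{D}$, i.e. the branch vanishing at $z=0$. For $0\le b\le1$, $\mathcal{A}_b$ is the class of analytic functions $f$ on $\mathbb{D}$ of the form $f(z)=z+a_2z^2+a_3z^3+\cdots$ with $|a_2|=2b$. For a class $\mathcal{F}$ of analytic functions on $\mathbb{D}$ normalized by $f(0)=0$, $f'(0)=1$, and $0\le\alpha<1$, the radius of starlikeness of order $\alpha$ of $\mathcal{F}$ is the supremum of $r\in(0,1]$ such that every $f\in\mathcal{F}$ satisfies $f(z)\ne0$ for $0<|z|<r$ and $\operatorname{Re}\big(zf'(z)/f(z)\big)>\alpha$ for $|z|<r$ (the quotient being $1$ at $z=0$). The radius of parabolic starlikeness of $\mathcal{F}$ is the supremum of $r\in(0,1]$ such that every $f\in\mathcal{F}$ satisfies $\operatorname{Re}\big(zf'(z)/f(z)\big)>\left|zf'(z)/f(z)-1\right|$ for $|z|<r$. *)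

theory Defs
  imports "HOL-Analysis.Analysis"
begin

definition coeff0 :: "(complex \<Rightarrow> complex) \<Rightarrow> nat \<Rightarrow> complex" where
  "coeff0 f n = (deriv ^^ n) f 0 / of_nat (fact n)"

definition class_A :: "real \<Rightarrow> (complex \<Rightarrow> complex) set" where
  "class_A b = {f. f holomorphic_on ball 0 1 \<and> f 0 = 0 \<and> deriv f 0 = 1
                  \<and> norm (coeff0 f 2) = 2 * b}"

definition class_F :: "real \<Rightarrow> real \<Rightarrow> (complex \<Rightarrow> complex) set" where
  "class_F b M = {f \<in> class_A b. \<forall>n\<ge>3. norm (coeff0 f n) \<le> M / real n}"

definition sq :: "(complex \<Rightarrow> complex) \<Rightarrow> complex \<Rightarrow> complex" where
  "sq f z = (if z = 0 then 1 else z * deriv f z / f z)"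

definition starlike_radius :: "real \<Rightarrow> (complex \<Rightarrow> complex) set \<Rightarrow> real" where
  "starlike_radius \<alpha> F = Sup {r. 0 < r \<and> r \<le> 1 \<and> (\<forall>f\<in>F.
      (\<forall>z. 0 < norm z \<and> norm z < r \<longrightarrow> f z \<noteq> 0) \<and>
      (\<forall>z. norm z < r \<longrightarrow> Re (sq f z) > \<alpha>))}"

definition parabolic_radius :: "(complex \<Rightarrow> complex) set \<Rightarrow> real" where
  "parabolic_radius F = Sup {r. 0 < r \<and> r \<le> 1 \<and> (\<forall>f\<in>F.
      \<forall>z. norm z < r \<longrightarrow> Re (sq f z) > norm (sq f z - 1))}"

definition r0_eq :: "real \<Rightarrow> real \<Rightarrow> real \<Rightarrow> real \<Rightarrow> bool" where
  "r0_eq M b \<alpha> r \<longleftrightarrow>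
     2 * M * (1 + \<alpha> * (1 - r) * ln (1 - r) / r)
       = (2 * (1 + M) * (1 - \<alpha>) + (2 - \<alpha>) * (M - 4 * b) * r) * (1 - r)"

definition r0 :: "real \<Rightarrow> real \<Rightarrow> real \<Rightarrow> real" where
  "r0 M b \<alpha> = (THE r. 0 < r \<and> r < 1 \<and> r0_eq M b \<alpha> r)"

definition f0 :: "real \<Rightarrow> real \<Rightarrow> complex \<Rightarrow> complex" where
  "f0 M b z = (1 + of_real M) * z + of_real (M / 2 - 2 * b) * z ^ 2 + of_real M * Ln (1 - z)"

end

theory Submission
  imports Defs "HOL-Complex_Analysis.Complex_Analysis"
begin

definition dd :: "real \<Rightarrow> real \<Rightarrow> nat \<Rightarrow> real" where
  "dd b M n = (if n = 1 then 2*b else if n \<ge> 2 then M / real (n+1) else 0)"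

definition S0 :: "real \<Rightarrow> real \<Rightarrow> real \<Rightarrow> real" where
  "S0 b M x = (\<Sum>n. dd b M n * x^n)"

definition S1 :: "real \<Rightarrow> real \<Rightarrow> real \<Rightarrow> real" where
  "S1 b M x = (\<Sum>n. (real (n+1) * dd b M n) * x^n)"

lemma dd_nonneg: "0 \<le> b \<Longrightarrow> 0 < M \<Longrightarrow> 0 \<le> dd b M n"
  by (auto simp: dd_def)

lemma dd_0 [simp]: "dd b M 0 = 0"
  by (simp add: dd_def)

lemma dd_le: "0 \<le> b \<Longrightarrow> 0 < M \<Longrightarrow> dd b M n \<le> 2*b + M"
proof -
  assume a: "0 \<le> b" "0 < M"
  have "M / real (n+1) \<le> M" using a by (simp add: divide_le_eq)
  then show ?thesis using a by (auto simp: dd_def)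
qed

lemma dd1_le: "0 \<le> b \<Longrightarrow> 0 < M \<Longrightarrow> real (n+1) * dd b M n \<le> 4*b + M"
  by (auto simp: dd_def)

lemma summ_bound:
  fixes c :: "nat \<Rightarrow> real"
  assumes "\<And>n. \<bar>c n\<bar> \<le> K" "\<bar>x\<bar> < 1"
  shows "summable (\<lambda>n. c n * x^n)"
proof (rule summable_comparison_test')
  show "summable (\<lambda>n. K * \<bar>x\<bar>^n)"
    using assms(2) by (intro summable_mult summable_geometric) auto
  fix n :: nat
  show "norm (c n * x^n) \<le> K * \<bar>x\<bar>^n"
    using assms(1)[of n] by (simp add: abs_mult power_abs mult_right_mono)
qed

lemma summ_S0: "0 \<le> b \<Longrightarrow> 0 < M \<Longrightarrow> \<bar>x\<bar> < 1 \<Longrightarrow> summable (\<lambda>n. dd b M n * x^n)"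
  by (rule summ_bound[where K="2*b+M"]) (auto simp: dd_nonneg dd_le)

lemma summ_S1: "0 \<le> b \<Longrightarrow> 0 < M \<Longrightarrow> \<bar>x\<bar> < 1 \<Longrightarrow> summable (\<lambda>n. (real (n+1) * dd b M n) * x^n)"
proof (rule summ_bound[where K="4*b+M"])
  fix n assume "0 \<le> b" "0 < M"
  then show "\<bar>real (n+1) * dd b M n\<bar> \<le> 4*b+M"
    using dd1_le[of b M n] dd_nonneg[of b M n] by (simp only: abs_of_nonneg mult_nonneg_nonneg of_nat_0_le_iff)
qed

lemma S1_closed:
  assumes "0 \<le> b" "0 < M" "0 \<le> x" "x < 1"
  shows "S1 b M x = 4*b*x + M*x^2/(1-x)"
proof -
  have s1: "(\<lambda>n. M * x^n) sums (M * (1/(1-x)))"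
    using assms by (intro sums_mult geometric_sums) auto
  have s2: "(\<lambda>n. if n = 0 then M else 0) sums M"
    using sums_single[of 0 "\<lambda>_. M"] by simp
  have s3: "(\<lambda>n. if n = 1 then (M - 4*b)*x else 0) sums ((M-4*b)*x)"
    using sums_single[of 1 "\<lambda>_. (M-4*b)*x"] by simp
  have "(\<lambda>n. M * x^n - (if n = 0 then M else 0) - (if n = 1 then (M - 4*b)*x else 0))
      sums (M * (1/(1-x)) - M - (M-4*b)*x)"
    by (intro sums_diff s1 s2 s3)
  moreover have "(\<lambda>n. M * x^n - (if n = 0 then M else 0) - (if n = 1 then (M - 4*b)*x else 0))
      = (\<lambda>n. (real (n+1) * dd b M n) * x^n)"
  proof
    fix n :: nat
    show "M * x^n - (if n = 0 then M else 0) - (if n = 1 then (M - 4*b)*x else 0)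
      = (real (n+1) * dd b M n) * x^n"
      by (cases "n = 0"; cases "n = 1") (auto simp: dd_def field_simps)
  qed
  ultimately have "S1 b M x = M * (1/(1-x)) - M - (M-4*b)*x"
    unfolding S1_def by (simp add: sums_iff)
  also have "\<dots> = 4*b*x + M*x^2/(1-x)"
    using assms by (simp add: field_simps power2_eq_square)
  finally show ?thesis .
qed

lemma S0_closed:
  assumes "0 \<le> b" "0 < M" "0 \<le> x" "x < 1"
  shows "x * S0 b M x = 2*b*x^2 + M*(-ln(1-x) - x - x^2/2)"
proof -
  have l: "(\<lambda>n. - ((x)^n) / of_nat n) sums ln (1 - x)"
    using ln_series'[of "-x"] assms by simp
  have l2: "(\<lambda>n. - ((x)^(Suc n)) / of_nat (Suc n)) sums ln (1 - x)"
    using l by (subst sums_Suc_iff) simp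
  have s1: "(\<lambda>n. -M * (- ((x)^(Suc n)) / of_nat (Suc n))) sums (-M * ln (1-x))"
    by (intro sums_mult l2)
  have s2: "(\<lambda>n. if n = 0 then M*x else 0) sums (M*x)"
    using sums_single[of 0 "\<lambda>_. M*x"] by simp
  have s3: "(\<lambda>n. if n = 1 then (M/2 - 2*b)*x^2 else 0) sums ((M/2 - 2*b)*x^2)"
    using sums_single[of 1 "\<lambda>_. (M/2 - 2*b)*x^2"] by simp
  have "(\<lambda>n. -M * (- ((x)^(Suc n)) / of_nat (Suc n)) - (if n = 0 then M*x else 0)
        - (if n = 1 then (M/2 - 2*b)*x^2 else 0))
      sums (-M * ln (1-x) - M*x - (M/2 - 2*b)*x^2)"
    by (intro sums_diff s1 s2 s3)
  moreover have "(\<lambda>n. -M * (- ((x)^(Suc n)) / of_nat (Suc n)) - (if n = 0 then M*x else 0)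
        - (if n = 1 then (M/2 - 2*b)*x^2 else 0)) = (\<lambda>n. x * (dd b M n * x^n))"
  proof
    fix n :: nat
    show "-M * (- ((x)^(Suc n)) / of_nat (Suc n)) - (if n = 0 then M*x else 0)
        - (if n = 1 then (M/2 - 2*b)*x^2 else 0) = x * (dd b M n * x^n)"
      by (cases "n = 0"; cases "n = 1") (auto simp: dd_def algebra_simps power2_eq_square)
  qed
  ultimately have "(\<Sum>n. x * (dd b M n * x^n)) = -M * ln (1-x) - M*x - (M/2 - 2*b)*x^2"
    by (simp add: sums_iff)
  moreover have "(\<Sum>n. x * (dd b M n * x^n)) = x * S0 b M x"
    unfolding S0_def using summ_S0[of b M x] assms by (intro suminf_mult) auto
  ultimately show ?thesis by (simp add: algebra_simps)
qed

definition Gf :: "real \<Rightarrow> real \<Rightarrow> real \<Rightarrow> real \<Rightarrow> real" where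
  "Gf b M \<alpha> x = (\<Sum>n. ((real (n+1) - \<alpha>) * dd b M n) * x^n)"

lemma cont_ps:
  fixes c :: "nat \<Rightarrow> real"
  assumes "\<And>n. \<bar>c n\<bar> \<le> K" "\<bar>x\<bar> < 1"
  shows "isCont (\<lambda>x. \<Sum>n. c n * x^n) x"
proof (rule isCont_powser)
  show "summable (\<lambda>n. c n * ((\<bar>x\<bar>+1)/2)^n)"
    using assms by (intro summ_bound[where K=K]) auto
  show "norm x < norm ((\<bar>x\<bar>+1)/2)" using assms by auto
qed

context
  fixes b M \<alpha> :: real
  assumes b0: "0 \<le> b" and M0: "0 < M" and a0: "0 \<le> \<alpha>" and a1: "\<alpha> < 1"
begin

lemma gg_bound: "\<bar>(real (n+1) - \<alpha>) * dd b M n\<bar> \<le> 4*b + M"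
proof -
  have "0 \<le> (real (n+1) - \<alpha>) * dd b M n"
    using a1 dd_nonneg[OF b0 M0] by auto
  moreover have "(real (n+1) - \<alpha>) * dd b M n \<le> real (n+1) * dd b M n"
    using a0 dd_nonneg[OF b0 M0, of n] by (simp add: mult_right_mono)
  ultimately show ?thesis using dd1_le[OF b0 M0, of n] by simp
qed

lemma summ_G: "\<bar>x\<bar> < 1 \<Longrightarrow> summable (\<lambda>n. ((real (n+1) - \<alpha>) * dd b M n) * x^n)"
  by (rule summ_bound[OF gg_bound])

lemma G_eq: "\<bar>x\<bar> < 1 \<Longrightarrow> Gf b M \<alpha> x = S1 b M x - \<alpha> * S0 b M x"
proof -
  assume x: "\<bar>x\<bar> < 1"
  have "S1 b M x - \<alpha> * S0 b M x = (\<Sum>n. (real (n+1) * dd b M n) * x^n - \<alpha> * (dd b M n * x^n))"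
    unfolding S1_def S0_def
    using summ_S1[OF b0 M0 x] summ_S0[OF b0 M0 x]
    by (subst suminf_mult[symmetric]) (auto intro: suminf_diff)
  also have "\<dots> = Gf b M \<alpha> x"
    unfolding Gf_def by (rule suminf_cong) (simp add: algebra_simps)
  finally show ?thesis by simp
qed

lemma G_cont: "\<bar>x\<bar> < 1 \<Longrightarrow> isCont (Gf b M \<alpha>) x"
  unfolding Gf_def[abs_def] by (rule cont_ps[OF gg_bound])

lemma S0_cont: "\<bar>x\<bar> < 1 \<Longrightarrow> isCont (S0 b M) x"
  unfolding S0_def[abs_def] by (rule cont_ps[where K="2*b+M"]) (auto simp: dd_nonneg[OF b0 M0] dd_le[OF b0 M0])

lemma G_0: "Gf b M \<alpha> 0 = 0"
  unfolding Gf_def by (simp add: powser_zero)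

lemma G_strict_mono:
  assumes "0 \<le> x" "x < y" "y < 1"
  shows "Gf b M \<alpha> x < Gf b M \<alpha> y"
proof -
  have sx: "summable (\<lambda>n. ((real (n+1) - \<alpha>) * dd b M n) * x^n)" using assms by (intro summ_G) auto
  have sy: "summable (\<lambda>n. ((real (n+1) - \<alpha>) * dd b M n) * y^n)" using assms by (intro summ_G) auto
  have "Gf b M \<alpha> y - Gf b M \<alpha> x = (\<Sum>n. ((real (n+1) - \<alpha>) * dd b M n) * y^n - ((real (n+1) - \<alpha>) * dd b M n) * x^n)"
    unfolding Gf_def using sy sx by (rule suminf_diff)
  also have "\<dots> > 0"
  proof (subst suminf_pos_iff)
    show "summable (\<lambda>n. ((real (n+1) - \<alpha>) * dd b M n) * y^n - ((real (n+1) - \<alpha>) * dd b M n) * x^n)"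
      using sy sx by (rule summable_diff)
    fix n
    have "0 \<le> (real (n+1) - \<alpha>) * dd b M n" using a1 dd_nonneg[OF b0 M0] by auto
    moreover have "x^n \<le> y^n" using assms by (intro power_mono) auto
    ultimately show "0 \<le> ((real (n+1) - \<alpha>) * dd b M n) * y^n - ((real (n+1) - \<alpha>) * dd b M n) * x^n"
      by (simp add: mult_left_mono)
  next
    have "x^2 < y^2" using assms by (intro power_strict_mono) auto
    moreover have "0 < (real (2+1) - \<alpha>) * dd b M 2" using a1 M0 by (simp add: dd_def)
    ultimately have "0 < ((real (2+1) - \<alpha>) * dd b M 2) * y^2 - ((real (2+1) - \<alpha>) * dd b M 2) * x^2"
      by (simp add: mult_strict_left_mono)
    then show "\<exists>i. 0 < ((real (i+1) - \<alpha>) * dd b M i) * y^i - ((real (i+1) - \<alpha>) * dd b M i) * x^i"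
      by blast
  qed
  finally show ?thesis by simp
qed

lemma S0_le_S1: "\<bar>x\<bar> < 1 \<Longrightarrow> 0 \<le> x \<Longrightarrow> 2 * S0 b M x \<le> S1 b M x"
proof -
  assume x: "\<bar>x\<bar> < 1" "0 \<le> x"
  have "2 * S0 b M x = (\<Sum>n. 2 * (dd b M n * x^n))"
    unfolding S0_def using summ_S0[OF b0 M0 x(1)] by (rule suminf_mult[symmetric])
  also have "\<dots> \<le> S1 b M x"
    unfolding S1_def
  proof (rule suminf_le)
    fix n
    show "2 * (dd b M n * x^n) \<le> (real (n+1) * dd b M n) * x^n"
    proof (cases "n = 0")
      case False
      then have "2 \<le> real (n+1)" by simp
      then show ?thesis using dd_nonneg[OF b0 M0, of n] x(2)
        by (simp add: mult_right_mono mult.assoc)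
    qed simp
  qed (use summ_S0[OF b0 M0 x(1)] summ_S1[OF b0 M0 x(1)] in auto)
  finally show ?thesis .
qed

lemma S0_nonneg: "0 \<le> x \<Longrightarrow> x < 1 \<Longrightarrow> 0 \<le> S0 b M x"
  unfolding S0_def using summ_S0[OF b0 M0, of x]
  by (intro suminf_nonneg) (auto simp: dd_nonneg[OF b0 M0])

lemma G_big: "\<exists>x1. 0 < x1 \<and> x1 < 1 \<and> Gf b M \<alpha> x1 > 1 - \<alpha>"
proof -
  define x1 where "x1 = 1 - min (1/2) (M/8)"
  have x1: "1/2 \<le> x1" "x1 < 1" "1 - x1 \<le> M/8" "0 < 1 - x1" using M0 by (auto simp: x1_def)
  have "x1^2 \<ge> 1/4" using x1 power_mono[of "1/2" x1 2] by (simp add: power2_eq_square)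
  then have "M*x1^2 \<ge> M/4" using M0 by simp
  moreover have "2*(1-x1) \<le> M/4" using x1(3) by simp
  ultimately have "M*x1^2 \<ge> 2*(1-x1)" by linarith
  then have "M*x1^2/(1-x1) \<ge> 2" using x1 by (simp add: le_divide_eq)
  moreover have "0 \<le> 4*b*x1" using b0 x1 by simp
  moreover have "S1 b M x1 = 4*b*x1 + M*x1^2/(1-x1)" using S1_closed[OF b0 M0, of x1] x1 by simp
  ultimately have S1b: "S1 b M x1 \<ge> 2" by linarith
  have "S0 b M x1 \<le> S1 b M x1" using S0_le_S1[of x1] S0_nonneg[of x1] x1 by auto
  then have "\<alpha> * S0 b M x1 \<le> \<alpha> * S1 b M x1" using a0 by (rule mult_left_mono)
  then have "Gf b M \<alpha> x1 \<ge> (1-\<alpha>) * S1 b M x1"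
    using G_eq[of x1] x1 by (simp add: algebra_simps)
  moreover have "(1-\<alpha>) * S1 b M x1 \<ge> (1-\<alpha>) * 2" using S1b a1 by (intro mult_left_mono) auto
  moreover have "(1-\<alpha>) * 2 = 2 - 2*\<alpha>" by simp
  ultimately have "Gf b M \<alpha> x1 > 1 - \<alpha>" using a1 by linarith
  then show ?thesis using x1 by (intro exI[of _ x1]) auto
qed

lemma r0_eq_iff:
  assumes "0 < x" "x < 1"
  shows "r0_eq M b \<alpha> x \<longleftrightarrow> Gf b M \<alpha> x = 1 - \<alpha>"
proof -
  define L where "L = ln (1 - x)"
  have h1: "S1 b M x = 4*b*x + M*x^2/(1-x)" using S1_closed[OF b0 M0] assms by auto
  have h0: "x * S0 b M x = 2*b*x^2 + M*(-L - x - x^2/2)" using S0_closed[OF b0 M0] assms by (auto simp: L_def)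
  have G: "Gf b M \<alpha> x = S1 b M x - \<alpha> * S0 b M x" using G_eq assms by auto
  have key: "x * ((2 * (1 + M) * (1 - \<alpha>) + (2 - \<alpha>) * (M - 4 * b) * x) * (1 - x) - 2 * M * (1 + \<alpha> * (1 - x) * L / x))
     = 2*(1-x)*(x*(1-\<alpha>) - x*S1 b M x + \<alpha>*(x*S0 b M x))"
    unfolding h1 h0 using assms by (simp add: field_simps power2_eq_square)
  have "r0_eq M b \<alpha> x \<longleftrightarrow> x * ((2 * (1 + M) * (1 - \<alpha>) + (2 - \<alpha>) * (M - 4 * b) * x) * (1 - x) - 2 * M * (1 + \<alpha> * (1 - x) * L / x)) = 0"
    unfolding r0_eq_def L_def using assms by auto
  also have "\<dots> \<longleftrightarrow> x*(1-\<alpha>) - x*S1 b M x + \<alpha>*(x*S0 b M x) = 0"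
    unfolding key using assms by auto
  also have "\<dots> \<longleftrightarrow> x * ((1-\<alpha>) - Gf b M \<alpha> x) = 0"
    unfolding G by (simp add: algebra_simps)
  also have "\<dots> \<longleftrightarrow> Gf b M \<alpha> x = 1 - \<alpha>" using assms by auto
  finally show ?thesis .
qed

lemma r0_props:
  shows "0 < r0 M b \<alpha> \<and> r0 M b \<alpha> < 1 \<and> Gf b M \<alpha> (r0 M b \<alpha>) = 1 - \<alpha>"
proof -
  obtain x1 where x1: "0 < x1" "x1 < 1" "Gf b M \<alpha> x1 > 1 - \<alpha>" using G_big by blast
  have "\<exists>x\<ge>0. x \<le> x1 \<and> Gf b M \<alpha> x = 1 - \<alpha>"
  proof (rule IVT')
    show "Gf b M \<alpha> 0 \<le> 1 - \<alpha>" using G_0 a1 by simp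
    show "1 - \<alpha> \<le> Gf b M \<alpha> x1" using x1 by simp
    show "0 \<le> x1" using x1 by simp
    show "continuous_on {0..x1} (Gf b M \<alpha>)"
      using x1 by (intro continuous_at_imp_continuous_on ballI G_cont) auto
  qed
  then obtain x where x: "0 \<le> x" "x \<le> x1" "Gf b M \<alpha> x = 1 - \<alpha>" by blast
  have "x \<noteq> 0" using x G_0 a1 by auto
  then have xx: "0 < x" "x < 1" using x x1 by auto
  have uniq: "y = x" if "0 < y" "y < 1" "r0_eq M b \<alpha> y" for y
  proof -
    have gy: "Gf b M \<alpha> y = 1 - \<alpha>" using r0_eq_iff that by auto
    show ?thesis
    proof (rule ccontr)
      assume "y \<noteq> x"
      then consider "y < x" | "x < y" by linarith
      then show False
      proof cases
        case 1 then show ?thesis using G_strict_mono[of y x] that xx gy x by auto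
      next
        case 2 then show ?thesis using G_strict_mono[of x y] that xx gy x by auto
      qed
    qed
  qed
  have "r0 M b \<alpha> = x"
    unfolding r0_def
  proof (rule the_equality)
    show "0 < x \<and> x < 1 \<and> r0_eq M b \<alpha> x" using xx x r0_eq_iff by auto
  next
    fix y assume "0 < y \<and> y < 1 \<and> r0_eq M b \<alpha> y"
    then show "y = x" using uniq by blast
  qed
  then show ?thesis using xx x by simp
qed

end


lemma norm_sums_le:
  fixes u :: "nat \<Rightarrow> complex"
  assumes "u sums s" "\<And>n. norm (u n) \<le> v n" "summable v"
  shows "norm s \<le> suminf v"
proof -
  have sn: "summable (\<lambda>n. norm (u n))"
    by (rule summable_comparison_test'[OF assms(3)]) (use assms(2) in auto)
  have "norm s = norm (suminf u)" using assms(1) by (simp add: sums_iff)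
  also have "\<dots> \<le> (\<Sum>n. norm (u n))" by (rule summable_norm[OF sn])
  also have "\<dots> \<le> suminf v" by (rule suminf_le[OF assms(2) sn assms(3)])
  finally show ?thesis .
qed

lemma series_f:
  assumes "f holomorphic_on ball 0 1" "norm z < 1"
  shows "(\<lambda>n. coeff0 f n * z^n) sums f z"
  using holomorphic_power_series[OF assms(1), of z] assms(2) by (simp add: coeff0_def)

lemma series_deriv:
  assumes "f holomorphic_on ball 0 1" "norm z < 1"
  shows "(\<lambda>n. of_nat (Suc n) * coeff0 f (Suc n) * z^n) sums deriv f z"
proof -
  have h: "deriv f holomorphic_on ball 0 1" using assms(1) by (rule holomorphic_deriv) simp
  have "(\<lambda>n. (deriv ^^ n) (deriv f) 0 / fact n * (z - 0)^n) sums deriv f z"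
    using holomorphic_power_series[OF h, of z] assms(2) by simp
  moreover have "(deriv ^^ n) (deriv f) = (deriv ^^ Suc n) f" for n
    by (simp add: funpow_Suc_right del: funpow.simps)
  ultimately have "(\<lambda>n. (deriv ^^ Suc n) f 0 / fact n * z^n) sums deriv f z" by simp
  moreover have cf: "(deriv ^^ Suc n) f 0 / fact n = of_nat (Suc n) * coeff0 f (Suc n)" for n
  proof -
    have h: "X / F = c * (X / (c*F))" if "(c::complex) \<noteq> 0" for X F c
      using that by (cases "F = 0") (simp_all add: field_simps)
    show ?thesis unfolding coeff0_def of_nat_fact unfolding fact_Suc
      by (rule h) (simp del: of_nat_Suc)
  qed
  ultimately have "(\<lambda>n. (deriv ^^ Suc n) f 0 / fact n * z^n) sums deriv f z"
    by (simp del: funpow.simps)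
  also have "(\<lambda>n. (deriv ^^ Suc n) f 0 / fact n * z^n) = (\<lambda>n. of_nat (Suc n) * coeff0 f (Suc n) * z^n)"
    by (rule ext) (simp only: cf)
  finally show ?thesis .
qed

lemma series_B:
  assumes "f holomorphic_on ball 0 1" "norm z < 1" "f 0 = 0"
  shows "\<exists>B. (\<lambda>n. coeff0 f (Suc n) * z^n) sums B \<and> f z = z * B"
proof (cases "z = 0")
  case True
  then show ?thesis using assms(3) powser_sums_zero[of "\<lambda>n. coeff0 f (Suc n)"] by auto
next
  case False
  have "(\<lambda>n. coeff0 f n * z^n) sums f z" by (rule series_f[OF assms(1,2)])
  moreover have "coeff0 f 0 = 0" using assms(3) by (simp add: coeff0_def)
  ultimately have "(\<lambda>n. coeff0 f (Suc n) * z^(Suc n)) sums f z"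
    by (subst sums_Suc_iff) simp
  then have "(\<lambda>n. coeff0 f (Suc n) * z^(Suc n) / z) sums (f z / z)" by (rule sums_divide)
  then have "(\<lambda>n. coeff0 f (Suc n) * z^n) sums (f z / z)" using False by simp
  then show ?thesis using False by (intro exI[of _ "f z / z"]) auto
qed

lemma coeff0_1: "coeff0 f 1 = deriv f 0"
  by (simp add: coeff0_def)

lemma core:
  assumes b0: "0 \<le> b" and M0: "0 < M"
    and f: "f \<in> class_F b M" and z: "0 < norm z" "norm z < 1"
    and S: "S0 b M (norm z) < 1"
  shows "f z \<noteq> 0 \<and> norm (sq f z - 1) \<le> (S1 b M (norm z) - S0 b M (norm z)) / (1 - S0 b M (norm z))"
proof -
  define \<rho> where "\<rho> = norm z"
  define a where "a = coeff0 f"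
  have hol: "f holomorphic_on ball 0 1" and f00: "f 0 = 0" and d1: "deriv f 0 = 1"
    and a2: "norm (a 2) = 2*b" and an: "\<And>n. n \<ge> 3 \<Longrightarrow> norm (a n) \<le> M / real n"
    using f by (auto simp: class_F_def class_A_def a_def)
  have a1: "a 1 = 1" unfolding a_def coeff0_1 d1 ..
  have abound: "norm (a (Suc n)) \<le> dd b M n" if "n \<ge> 1" for n
  proof (cases "n = 1")
    case True then show ?thesis using a2 by (simp add: dd_def numeral_2_eq_2)
  next
    case False
    then have "Suc n \<ge> 3" using that by auto
    then show ?thesis using an[of "Suc n"] False that by (simp add: dd_def)
  qed
  have r: "\<bar>\<rho>\<bar> < 1" using z by (simp add: \<rho>_def)
  obtain B where B: "(\<lambda>n. a (Suc n) * z^n) sums B" "f z = z * B"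
    using series_B[OF hol z(2) f00] by (auto simp: a_def)
  have D: "(\<lambda>n. of_nat (Suc n) * a (Suc n) * z^n) sums deriv f z"
    using series_deriv[OF hol z(2)] by (simp add: a_def)
  have s1: "(\<lambda>n. if n = 0 then (1::complex) else 0) sums 1"
    using sums_single[of 0 "\<lambda>_. (1::complex)"] by simp
  have Bm1: "(\<lambda>n. a (Suc n) * z^n - (if n = 0 then 1 else 0)) sums (B - 1)"
    by (rule sums_diff[OF B(1) s1])
  have nB1: "norm (B - 1) \<le> S0 b M \<rho>"
    unfolding S0_def
  proof (rule norm_sums_le[OF Bm1])
    fix n
    show "norm (a (Suc n) * z^n - (if n = 0 then 1 else 0)) \<le> dd b M n * \<rho>^n"
    proof (cases "n = 0")
      case True then show ?thesis using a1 by simp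
    next
      case False
      then show ?thesis using abound[of n] by (simp add: norm_mult norm_power \<rho>_def mult_right_mono)
    qed
  qed (rule summ_S0[OF b0 M0 r])
  have DmB: "(\<lambda>n. of_nat (Suc n) * a (Suc n) * z^n - a (Suc n) * z^n) sums (deriv f z - B)"
    by (rule sums_diff[OF D B(1)])
  have "norm (deriv f z - B) \<le> (\<Sum>n. (real (n+1) * dd b M n) * \<rho>^n - dd b M n * \<rho>^n)"
  proof (rule norm_sums_le[OF DmB])
    fix n
    have e: "of_nat (Suc n) * a (Suc n) * z^n - a (Suc n) * z^n = of_nat n * (a (Suc n) * z^n)"
      by (simp add: algebra_simps)
    show "norm (of_nat (Suc n) * a (Suc n) * z^n - a (Suc n) * z^n) \<le> (real (n+1) * dd b M n) * \<rho>^n - dd b M n * \<rho>^n"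
    proof (cases "n = 0")
      case True then show ?thesis by simp
    next
      case False
      have "norm (of_nat n * (a (Suc n) * z^n)) = real n * (norm (a (Suc n)) * \<rho>^n)"
        by (simp add: norm_mult norm_power \<rho>_def)
      also have "\<dots> \<le> real n * (dd b M n * \<rho>^n)"
        using abound[of n] False by (intro mult_left_mono mult_right_mono) (auto simp: \<rho>_def)
      also have "\<dots> = (real (n+1) * dd b M n) * \<rho>^n - dd b M n * \<rho>^n" by (simp add: algebra_simps)
      finally show ?thesis unfolding e .
    qed
  next
    show "summable (\<lambda>n. (real (n+1) * dd b M n) * \<rho>^n - dd b M n * \<rho>^n)"
      by (intro summable_diff summ_S1[OF b0 M0 r] summ_S0[OF b0 M0 r])
  qed
  also have "\<dots> = S1 b M \<rho> - S0 b M \<rho>"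
    unfolding S1_def S0_def by (rule suminf_diff[symmetric]) (intro summ_S1[OF b0 M0 r] summ_S0[OF b0 M0 r])+
  finally have nD: "norm (deriv f z - B) \<le> S1 b M \<rho> - S0 b M \<rho>" .
  have "norm B \<ge> 1 - norm (B - 1)"
    using norm_triangle_ineq2[of 1 "1 - B"] by (simp add: norm_minus_commute)
  then have nB: "norm B \<ge> 1 - S0 b M \<rho>" using nB1 by linarith
  then have Bnz: "B \<noteq> 0" using S by (auto simp: \<rho>_def)
  have znz: "z \<noteq> 0" using z by auto
  have S01: "S0 b M \<rho> \<le> S1 b M \<rho>" using nD norm_ge_zero[of "deriv f z - B"] by linarith
  have "sq f z - 1 = (deriv f z - B) / B"
    using B(2) Bnz znz by (simp add: sq_def field_simps)
  then have "norm (sq f z - 1) = norm (deriv f z - B) / norm B" by (simp add: norm_divide)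
  also have "norm (deriv f z - B) / norm B \<le> (S1 b M \<rho> - S0 b M \<rho>) / (1 - S0 b M \<rho>)"
    by (rule frac_le) (use nD nB S S01 in \<open>auto simp: \<rho>_def\<close>)
  finally show ?thesis using B(2) Bnz znz by (simp add: \<rho>_def)
qed


definition cf0 :: "real \<Rightarrow> real \<Rightarrow> nat \<Rightarrow> complex" where
  "cf0 b M n = of_real (if n = 1 then 1 else if n = 2 then -2*b else -M / real n)"

lemma f0_series:
  assumes "norm z < 1"
  shows "(\<lambda>n. cf0 b M n * z^n) sums f0 M b z"
proof -
  have l: "(\<lambda>k. z ^ k / of_nat k) sums - Ln (1 - z)"
    using sums_minus[OF Ln_series[of "-z"]] assms by (simp add: power_minus')
  have s1: "(\<lambda>k. - of_real M * (z ^ k / of_nat k)) sums (- of_real M * (- Ln (1 - z)))"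
    by (rule sums_mult[OF l])
  have s2: "(\<lambda>k. if k = 1 then (1 + of_real M) * z else 0) sums ((1 + of_real M) * z)"
    using sums_single[of 1 "\<lambda>_. (1 + of_real M) * z"] by simp
  have s3: "(\<lambda>k. if k = 2 then of_real (M/2 - 2*b) * z^2 else 0) sums (of_real (M/2 - 2*b) * z^2)"
    using sums_single[of 2 "\<lambda>_. of_real (M/2 - 2*b) * z^2"] by simp
  have "(\<lambda>k. - of_real M * (z ^ k / of_nat k) + (if k = 1 then (1 + of_real M) * z else 0)
         + (if k = 2 then of_real (M/2 - 2*b) * z^2 else 0))
      sums (- of_real M * (- Ln (1 - z)) + (1 + of_real M) * z + of_real (M/2 - 2*b) * z^2)"
    by (intro sums_add s1 s2 s3)
  moreover have "(\<lambda>k. - of_real M * (z ^ k / of_nat k) + (if k = 1 then (1 + of_real M) * z else 0)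
         + (if k = 2 then of_real (M/2 - 2*b) * z^2 else 0)) = (\<lambda>n. cf0 b M n * z^n)"
  proof
    fix k :: nat
    show "- of_real M * (z ^ k / of_nat k) + (if k = 1 then (1 + of_real M) * z else 0)
         + (if k = 2 then of_real (M/2 - 2*b) * z^2 else 0) = cf0 b M k * z^k"
      by (cases "k = 1"; cases "k = 2") (auto simp: cf0_def field_simps power2_eq_square)
  qed
  moreover have "- of_real M * (- Ln (1 - z)) + (1 + of_real M) * z + of_real (M/2 - 2*b) * z^2 = f0 M b z"
    by (simp add: f0_def algebra_simps)
  ultimately show ?thesis by simp
qed

lemma f0_hol: "f0 M b holomorphic_on ball 0 1"
  by (rule power_series_holomorphic[where a="cf0 b M"]) (use f0_series in auto)

lemma f0_coeff: "coeff0 (f0 M b) n = cf0 b M n"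
proof -
  have "f0 M b has_fps_expansion Abs_fps (cf0 b M)"
  proof (rule has_fps_expansionI)
    show "\<forall>\<^sub>F u in nhds 0. (\<lambda>n. fps_nth (Abs_fps (cf0 b M)) n * u ^ n) sums f0 M b u"
      unfolding eventually_nhds
      by (intro exI[of _ "ball 0 1"]) (auto intro: f0_series)
  qed
  from fps_nth_fps_expansion[OF this, of n] show ?thesis
    by (simp add: coeff0_def)
qed

lemma f0_in:
  assumes b0: "0 \<le> b" and M0: "0 < M"
  shows "f0 M b \<in> class_F b M"
proof -
  have "f0 M b 0 = 0" by (simp add: f0_def)
  moreover have "deriv (f0 M b) 0 = 1"
    unfolding coeff0_1[symmetric] f0_coeff cf0_def by simp
  moreover have "norm (coeff0 (f0 M b) 2) = 2 * b"
    using b0 by (simp add: f0_coeff cf0_def)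
  moreover have "norm (coeff0 (f0 M b) n) \<le> M / real n" if "n \<ge> 3" for n
    using that M0 by (simp add: f0_coeff cf0_def norm_divide)
  ultimately show ?thesis using f0_hol unfolding class_F_def class_A_def by auto
qed

lemma f0_sq:
  assumes b0: "0 \<le> b" and M0: "0 < M" and x: "0 < x" "x < 1"
  shows "sq (f0 M b) (of_real x) = of_real ((1 - S1 b M x) / (1 - S0 b M x))"
proof -
  have zx: "norm (complex_of_real x) < 1" using x by simp
  have xa: "\<bar>x\<bar> < 1" using x by simp
  obtain B where B: "(\<lambda>n. coeff0 (f0 M b) (Suc n) * (of_real x)^n) sums B" "f0 M b (of_real x) = of_real x * B"
    using series_B[OF f0_hol zx] by (auto simp: f0_def)
  have D: "(\<lambda>n. of_nat (Suc n) * coeff0 (f0 M b) (Suc n) * (of_real x)^n) sums deriv (f0 M b) (of_real x)"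
    by (rule series_deriv[OF f0_hol zx])
  have e1: "coeff0 (f0 M b) (Suc n) * (of_real x)^n = of_real ((if n = 0 then 1 else 0) - dd b M n * x^n)" for n
    by (cases "n = 0"; cases "n = 1") (auto simp: f0_coeff cf0_def dd_def)
  have nz: "1 + complex_of_nat n \<noteq> 0" for n
    using of_nat_neq_0[of n, where 'a=complex] by simp
  have e2: "of_nat (Suc n) * coeff0 (f0 M b) (Suc n) * (of_real x)^n
      = of_real ((if n = 0 then 1 else 0) - (real (n+1) * dd b M n) * x^n)" for n
    using nz[of n] by (cases "n = 0"; cases "n = 1") (auto simp: f0_coeff cf0_def dd_def)
  have s1: "(\<lambda>n. if n = 0 then (1::real) else 0) sums 1"
    using sums_single[of 0 "\<lambda>_. (1::real)"] by simp
  have r1: "(\<lambda>n. (if n = 0 then 1 else 0) - dd b M n * x^n) sums (1 - S0 b M x)"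
    unfolding S0_def by (intro sums_diff s1 summable_sums summ_S0[OF b0 M0 xa])
  have r2: "(\<lambda>n. (if n = 0 then 1 else 0) - (real (n+1) * dd b M n) * x^n) sums (1 - S1 b M x)"
    unfolding S1_def by (intro sums_diff s1 summable_sums summ_S1[OF b0 M0 xa])
  have "B = of_real (1 - S0 b M x)"
    using B(1) sums_of_real[OF r1] unfolding e1 by (rule sums_unique2)
  moreover have "deriv (f0 M b) (of_real x) = of_real (1 - S1 b M x)"
    using D sums_of_real[OF r2] unfolding e2 by (rule sums_unique2)
  ultimately show ?thesis using B(2) x by (simp add: sq_def)
qed


context
  fixes b M \<alpha> :: real
  assumes b0: "0 \<le> b" and M0: "0 < M" and a0: "0 \<le> \<alpha>" and a1: "\<alpha> < 1"
begin

lemma quant: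
  assumes "0 < \<rho>" "\<rho> < 1" "Gf b M \<alpha> \<rho> \<le> 1 - \<alpha>"
  shows "S0 b M \<rho> < 1" "(S1 b M \<rho> - S0 b M \<rho>) / (1 - S0 b M \<rho>) \<le> 1 - \<alpha>"
    "Gf b M \<alpha> \<rho> < 1 - \<alpha> \<Longrightarrow> (S1 b M \<rho> - S0 b M \<rho>) / (1 - S0 b M \<rho>) < 1 - \<alpha>"
proof -
  have r: "\<bar>\<rho>\<bar> < 1" using assms by simp
  have G: "Gf b M \<alpha> \<rho> = S1 b M \<rho> - \<alpha> * S0 b M \<rho>" using G_eq[OF b0 M0 a0 a1 r] .
  have two: "2 * S0 b M \<rho> \<le> S1 b M \<rho>" using S0_le_S1[OF b0 M0 a0 a1 r] assms by simp
  have nn: "0 \<le> S0 b M \<rho>" using S0_nonneg[OF b0 M0 a0 a1] assms by simp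
  have "(2 - \<alpha>) * S0 b M \<rho> \<le> 1 - \<alpha>" using G two assms(3) by (simp add: algebra_simps)
  moreover have "(1 - \<alpha>) < (2 - \<alpha>) * 1" by simp
  ultimately have "(2 - \<alpha>) * S0 b M \<rho> < (2 - \<alpha>) * 1" by linarith
  then show S: "S0 b M \<rho> < 1" using a1 by (simp add: mult_less_cancel_left)
  have "S1 b M \<rho> - S0 b M \<rho> \<le> (1 - \<alpha>) * (1 - S0 b M \<rho>)"
    using G assms(3) by (simp add: algebra_simps)
  then show "(S1 b M \<rho> - S0 b M \<rho>) / (1 - S0 b M \<rho>) \<le> 1 - \<alpha>"
    using S by (simp add: divide_le_eq)
  assume "Gf b M \<alpha> \<rho> < 1 - \<alpha>"
  then have "S1 b M \<rho> - S0 b M \<rho> < (1 - \<alpha>) * (1 - S0 b M \<rho>)"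
    using G by (simp add: algebra_simps)
  then show "(S1 b M \<rho> - S0 b M \<rho>) / (1 - S0 b M \<rho>) < 1 - \<alpha>"
    using S by (simp add: divide_less_eq)
qed

lemma bound_le:
  assumes f: "f \<in> class_F b M" and z: "norm z \<le> r0 M b \<alpha>"
  shows "norm (sq f z - 1) \<le> 1 - \<alpha>"
proof (cases "z = 0")
  case True then show ?thesis using a1 by (simp add: sq_def)
next
  case False
  have R: "0 < r0 M b \<alpha>" "r0 M b \<alpha> < 1" "Gf b M \<alpha> (r0 M b \<alpha>) = 1 - \<alpha>"
    using r0_props[OF b0 M0 a0 a1] by auto
  have zz: "0 < norm z" "norm z < 1" using False z R by auto
  have "Gf b M \<alpha> (norm z) \<le> 1 - \<alpha>"
  proof (cases "norm z = r0 M b \<alpha>")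
    case True then show ?thesis using R by simp
  next
    case False then show ?thesis using G_strict_mono[OF b0 M0 a0 a1, of "norm z" "r0 M b \<alpha>"] z R by simp
  qed
  note q = quant[OF zz this]
  show ?thesis using core[OF b0 M0 f zz q(1)] q(2) by linarith
qed

lemma bound_lt:
  assumes f: "f \<in> class_F b M" and z: "norm z < r0 M b \<alpha>"
  shows "norm (sq f z - 1) < 1 - \<alpha>" "z \<noteq> 0 \<Longrightarrow> f z \<noteq> 0"
proof -
  have R: "0 < r0 M b \<alpha>" "r0 M b \<alpha> < 1" "Gf b M \<alpha> (r0 M b \<alpha>) = 1 - \<alpha>"
    using r0_props[OF b0 M0 a0 a1] by auto
  have *: "norm (sq f z - 1) < 1 - \<alpha> \<and> f z \<noteq> 0" if "z \<noteq> 0"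
  proof -
    have zz: "0 < norm z" "norm z < 1" using that z R by auto
    have lt: "Gf b M \<alpha> (norm z) < 1 - \<alpha>"
      using G_strict_mono[OF b0 M0 a0 a1, of "norm z" "r0 M b \<alpha>"] z R by simp
    note q = quant[OF zz less_imp_le[OF lt]]
    show ?thesis using core[OF b0 M0 f zz q(1)] q(3)[OF lt] by linarith
  qed
  show "norm (sq f z - 1) < 1 - \<alpha>"
    using * a1 by (cases "z = 0") (auto simp: sq_def)
  show "z \<noteq> 0 \<Longrightarrow> f z \<noteq> 0" using * by blast
qed

lemma sharp:
  assumes s: "r0 M b \<alpha> < s"
  shows "\<exists>x. 0 < x \<and> x < s \<and> x < 1 \<and> Re (sq (f0 M b) (of_real x)) < \<alpha>"
proof -
  define r where "r = r0 M b \<alpha>"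
  have R: "0 < r" "r < 1" "Gf b M \<alpha> r = 1 - \<alpha>"
    using r0_props[OF b0 M0 a0 a1] by (auto simp: r_def)
  have Sr: "S0 b M r < 1" using quant(1)[of r] R by simp
  have "isCont (S0 b M) r" using S0_cont[OF b0 M0 a0 a1, of r] R by simp
  then obtain d where d: "d > 0" "\<And>y. y \<noteq> r \<Longrightarrow> norm (y - r) < d \<Longrightarrow> norm (S0 b M y - S0 b M r) < 1 - S0 b M r"
    unfolding isCont_def LIM_eq using Sr by (metis diff_gt_0_iff_gt)
  define x where "x = r + min d (min (s - r) (1 - r)) / 2"
  define m where "m = min d (min (s - r) (1 - r))"
  have m: "0 < m" "m \<le> d" "m \<le> s - r" "m \<le> 1 - r" using d s R by (auto simp: m_def r_def)
  have xm: "x = r + m / 2" by (simp add: x_def m_def)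
  have x: "r < x" "x < s" "x < 1" "norm (x - r) < d" using m unfolding xm by auto
  have S0x: "S0 b M x < 1" using d(2)[of x] x by auto
  have Gx: "Gf b M \<alpha> x > 1 - \<alpha>" using G_strict_mono[OF b0 M0 a0 a1, of r x] R x by simp
  have "Gf b M \<alpha> x = S1 b M x - \<alpha> * S0 b M x" using G_eq[OF b0 M0 a0 a1, of x] x R by simp
  then have "1 - S1 b M x < \<alpha> * (1 - S0 b M x)" using Gx by (simp add: algebra_simps)
  then have "(1 - S1 b M x) / (1 - S0 b M x) < \<alpha>" using S0x by (simp add: divide_less_eq)
  moreover have "sq (f0 M b) (of_real x) = of_real ((1 - S1 b M x) / (1 - S0 b M x))"
    using f0_sq[OF b0 M0, of x] x R by simp
  ultimately show ?thesis using x R by (intro exI[of _ x]) auto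
qed

lemma f0_val: "sq (f0 M b) (of_real (r0 M b \<alpha>)) = of_real \<alpha>"
proof -
  define r where "r = r0 M b \<alpha>"
  have R: "0 < r" "r < 1" "Gf b M \<alpha> r = 1 - \<alpha>"
    using r0_props[OF b0 M0 a0 a1] by (auto simp: r_def)
  have Sr: "S0 b M r < 1" using quant(1)[of r] R by simp
  have "Gf b M \<alpha> r = S1 b M r - \<alpha> * S0 b M r" using G_eq[OF b0 M0 a0 a1, of r] R by simp
  then have "1 - S1 b M r = \<alpha> * (1 - S0 b M r)" using R by (simp add: algebra_simps)
  then have "(1 - S1 b M r) / (1 - S0 b M r) = \<alpha>" using Sr by simp
  then show ?thesis using f0_sq[OF b0 M0, of r] R by (simp add: r_def)
qed

end

theorem theorem2p8:
  fixes b M \<alpha> :: real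
  assumes "0 \<le> b" "b \<le> 1" "M > 0" "0 \<le> \<alpha>" "\<alpha> < 1"
  shows "(\<forall>f\<in>class_F b M. \<forall>z. norm z \<le> r0 M b \<alpha> \<longrightarrow> norm (sq f z - 1) \<le> 1 - \<alpha>)
       \<and> starlike_radius \<alpha> (class_F b M) = r0 M b \<alpha>
       \<and> parabolic_radius (class_F b M) = r0 M b (1/2)
       \<and> f0 M b \<in> class_F b M
       \<and> sq (f0 M b) (complex_of_real (r0 M b \<alpha>)) = complex_of_real \<alpha>"
proof -
  note b0 = assms(1) and M0 = assms(3) and a0 = assms(4) and a1 = assms(5)
  have h0: "(0::real) \<le> 1/2" and h1: "(1/2::real) < 1" by auto
  have P1: "\<forall>f\<in>class_F b M. \<forall>z. norm z \<le> r0 M b \<alpha> \<longrightarrow> norm (sq f z - 1) \<le> 1 - \<alpha>"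
    using bound_le[OF b0 M0 a0 a1] by blast
  have F0: "f0 M b \<in> class_F b M" by (rule f0_in[OF b0 M0])
  have P2: "starlike_radius \<alpha> (class_F b M) = r0 M b \<alpha>"
    unfolding starlike_radius_def
  proof (rule cSup_eq_maximum)
    have R: "0 < r0 M b \<alpha>" "r0 M b \<alpha> < 1" using r0_props[OF b0 M0 a0 a1] by auto
    have "Re (sq f z) > \<alpha>" if f: "f \<in> class_F b M" and z: "norm z < r0 M b \<alpha>" for f z
    proof -
      have "norm (sq f z - 1) < 1 - \<alpha>" by (rule bound_lt(1)[OF b0 M0 a0 a1 f z])
      moreover have "\<bar>Re (sq f z - 1)\<bar> \<le> norm (sq f z - 1)" by (rule abs_Re_le_cmod)
      ultimately show ?thesis by simp
    qed
    moreover have "f z \<noteq> 0" if f: "f \<in> class_F b M" and z: "0 < norm z" "norm z < r0 M b \<alpha>" for f z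
      using bound_lt(2)[OF b0 M0 a0 a1 f z(2)] z by auto
    ultimately show "r0 M b \<alpha> \<in> {r. 0 < r \<and> r \<le> 1 \<and> (\<forall>f\<in>class_F b M.
      (\<forall>z. 0 < norm z \<and> norm z < r \<longrightarrow> f z \<noteq> 0) \<and> (\<forall>z. norm z < r \<longrightarrow> Re (sq f z) > \<alpha>))}"
      using R by auto
  next
    fix y assume y: "y \<in> {r. 0 < r \<and> r \<le> 1 \<and> (\<forall>f\<in>class_F b M.
      (\<forall>z. 0 < norm z \<and> norm z < r \<longrightarrow> f z \<noteq> 0) \<and> (\<forall>z. norm z < r \<longrightarrow> Re (sq f z) > \<alpha>))}"
    show "y \<le> r0 M b \<alpha>"
    proof (rule ccontr)
      assume "\<not> y \<le> r0 M b \<alpha>"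
      then obtain x where x: "0 < x" "x < y" "x < 1" "Re (sq (f0 M b) (of_real x)) < \<alpha>"
        using sharp[OF b0 M0 a0 a1] by (meson not_le)
      have "Re (sq (f0 M b) (of_real x)) > \<alpha>" using y F0 x by auto
      then show False using x by simp
    qed
  qed
  have P3: "parabolic_radius (class_F b M) = r0 M b (1/2)"
    unfolding parabolic_radius_def
  proof (rule cSup_eq_maximum)
    have R: "0 < r0 M b (1/2)" "r0 M b (1/2) < 1" using r0_props[OF b0 M0 h0 h1] by auto
    have "Re (sq f z) > norm (sq f z - 1)" if f: "f \<in> class_F b M" and z: "norm z < r0 M b (1/2)" for f z
    proof -
      have "norm (sq f z - 1) < 1 - 1/2" by (rule bound_lt(1)[OF b0 M0 h0 h1 f z])
      moreover have "\<bar>Re (sq f z - 1)\<bar> \<le> norm (sq f z - 1)" by (rule abs_Re_le_cmod)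
      ultimately show ?thesis by simp
    qed
    then show "r0 M b (1/2) \<in> {r. 0 < r \<and> r \<le> 1 \<and> (\<forall>f\<in>class_F b M.
      \<forall>z. norm z < r \<longrightarrow> Re (sq f z) > norm (sq f z - 1))}"
      using R by auto
  next
    fix y assume y: "y \<in> {r. 0 < r \<and> r \<le> 1 \<and> (\<forall>f\<in>class_F b M.
      \<forall>z. norm z < r \<longrightarrow> Re (sq f z) > norm (sq f z - 1))}"
    show "y \<le> r0 M b (1/2)"
    proof (rule ccontr)
      assume "\<not> y \<le> r0 M b (1/2)"
      then obtain x where x: "0 < x" "x < y" "x < 1" "Re (sq (f0 M b) (of_real x)) < 1/2"
        using sharp[OF b0 M0 h0 h1] by (meson not_le)
      have gt: "Re (sq (f0 M b) (of_real x)) > norm (sq (f0 M b) (of_real x) - 1)" using y F0 x by auto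
      have "\<bar>Re (sq (f0 M b) (of_real x) - 1)\<bar> \<le> norm (sq (f0 M b) (of_real x) - 1)" by (rule abs_Re_le_cmod)
      then show False using gt x by simp
    qed
  qed
  show ?thesis using P1 P2 P3 F0 f0_val[OF b0 M0 a0 a1] by blast
qed

end
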